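(* Let $H$ and $K$ be subgroups of a finite group $G$, and suppose $H\not\le C_G(K)$. Then $\Pr(H,K)\le \frac{n+m-1}{nm}$, where $n=|H:C_H(K)|$ and $m=\min_{x\in H\setminus C_H(K)}|K:C_K(x)|$.
   Context: For subsets $X,Y$ of a finite group, $\Pr(X,Y)=|\{(x,y)\in X\times Y: xy=yx\}|/(|X||Y|)$. $C_H(K)$ is the set of elements of $H$ commuting with every element of $K$; $C_K(x)$ the set of elements of $K$ commuting with $x$. *)

theory Defs
  imports "HOL-Algebra.Algebra"
begin

definition comm_prob :: "('a, 'b) monoid_scheme \<Rightarrow> 'a set \<Rightarrow> 'a set \<Rightarrow> real" where
  "comm_prob Gr A B =
     real (card {(a, b). a \<in> A \<and> b \<in> B \<and> monoid.mult Gr a b = monoid.mult Gr b a})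
     / (real (card A) * real (card B))"

definition centralizer_in :: "('a, 'b) monoid_scheme \<Rightarrow> 'a set \<Rightarrow> 'a set \<Rightarrow> 'a set" where
  "centralizer_in Gr A B = {h \<in> A. \<forall>k \<in> B. monoid.mult Gr h k = monoid.mult Gr k h}"

definition elt_centralizer_in :: "('a, 'b) monoid_scheme \<Rightarrow> 'a set \<Rightarrow> 'a \<Rightarrow> 'a set" where
  "elt_centralizer_in Gr B g = {k \<in> B. monoid.mult Gr k g = monoid.mult Gr g k}"

end

theory Submission
  imports Defs
begin

theorem lemma2p4:
  fixes G :: "('a, 'b) monoid_scheme" and H K :: "'a set"
  assumes "group G" and "finite (carrier G)"
    and "subgroup H G" and "subgroup K G"
    and "\<not> H \<subseteq> centralizer_in G (carrier G) K"
  defines "n \<equiv> real (card H) / real (card (centralizer_in G H K))"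
    and "m \<equiv> Min ((\<lambda>x. real (card K) / real (card (elt_centralizer_in G K x)))
                    ` (H - centralizer_in G H K))"
  shows "comm_prob G H K \<le> (n + m - 1) / (n * m)"
proof -
  interpret group G by fact
  have HG: "H \<subseteq> carrier G" using assms(3) subgroup.subset by blast
  have KG: "K \<subseteq> carrier G" using assms(4) subgroup.subset by blast
  have fH: "finite H" using HG assms(2) finite_subset by blast
  have fK: "finite K" using KG assms(2) finite_subset by blast
  have oneH: "\<one>\<^bsub>G\<^esub> \<in> H" using assms(3) subgroup.one_closed by blast
  have oneK: "\<one>\<^bsub>G\<^esub> \<in> K" using assms(4) subgroup.one_closed by blast
  define C where "C = centralizer_in G H K"
  define CK where "CK = elt_centralizer_in G K"
  have CH: "C \<subseteq> H" unfolding C_def centralizer_in_def by auto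
  have fC: "finite C" using CH fH finite_subset by blast
  have oneC: "\<one>\<^bsub>G\<^esub> \<in> C" using oneH KG unfolding C_def centralizer_in_def by auto
  have cpos: "card C > 0" using fC oneC card_gt_0_iff by blast
  have ch: "card C \<le> card H" using CH fH card_mono by blast
  have kpos: "card K > 0" using fK oneK card_gt_0_iff by blast
  have CKsub: "CK x \<subseteq> K" for x unfolding CK_def elt_centralizer_in_def by auto
  have CKpos: "card (CK x) > 0" if "x \<in> H" for x
  proof -
    have "\<one>\<^bsub>G\<^esub> \<in> CK x" using oneK that HG unfolding CK_def elt_centralizer_in_def by auto
    then show ?thesis using CKsub[of x] fK finite_subset card_gt_0_iff by (metis empty_iff)
  qed
  have CKle: "card (CK x) \<le> card K" for x using CKsub fK card_mono by blast
  have ne: "H - C \<noteq> {}"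
  proof
    assume "H - C = {}"
    then have "H \<subseteq> C" by blast
    then show False using assms(5) HG unfolding C_def centralizer_in_def by auto
  qed
  let ?f = "\<lambda>x. real (card K) / real (card (CK x))"
  have mdef: "m = Min (?f ` (H - C))" unfolding m_def C_def CK_def by simp
  have fin: "finite (?f ` (H - C))" using fH by simp
  have mpos: "m > 0"
  proof -
    have "m \<in> ?f ` (H - C)" unfolding mdef using fin ne Min_in by blast
    then obtain x where "x \<in> H" "m = ?f x" by blast
    then show ?thesis using CKpos kpos by simp
  qed
  have bound: "real (card (CK x)) \<le> real (card K) / m" if "x \<in> H - C" for x
  proof -
    have "m \<le> ?f x" unfolding mdef using fin that by (intro Min_le) auto
    then have "m * real (card (CK x)) \<le> real (card K)"
      using CKpos[of x] that by (simp add: le_divide_eq)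
    then show ?thesis using mpos by (simp add: field_simps)
  qed
  have CKC: "CK x = K" if "x \<in> C" for x
    using that unfolding C_def CK_def centralizer_in_def elt_centralizer_in_def by auto
  have pairs: "{(a, b). a \<in> H \<and> b \<in> K \<and> a \<otimes>\<^bsub>G\<^esub> b = b \<otimes>\<^bsub>G\<^esub> a} = Sigma H CK"
    unfolding CK_def elt_centralizer_in_def by auto
  have "card (Sigma H CK) = (\<Sum>x\<in>H. card (CK x))"
    using fH fK CKsub finite_subset by (subst card_SigmaI) (auto intro: finite_subset[OF CKsub fK])
  then have S: "real (card {(a, b). a \<in> H \<and> b \<in> K \<and> a \<otimes>\<^bsub>G\<^esub> b = b \<otimes>\<^bsub>G\<^esub> a})
      = (\<Sum>x\<in>H. real (card (CK x)))" using pairs by simp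
  have split: "(\<Sum>x\<in>H. real (card (CK x))) = (\<Sum>x\<in>C. real (card (CK x))) + (\<Sum>x\<in>H - C. real (card (CK x)))"
    using fH CH by (metis add.commute sum.subset_diff)
  have s1: "(\<Sum>x\<in>C. real (card (CK x))) = real (card C) * real (card K)"
    using CKC by simp
  have s2: "(\<Sum>x\<in>H - C. real (card (CK x))) \<le> (\<Sum>x\<in>H - C. real (card K) / m)"
    using bound by (rule sum_mono)
  have s2': "(\<Sum>x\<in>H - C. real (card K) / m) = (real (card H) - real (card C)) * real (card K) / m"
    using fH CH card_Diff_subset[OF fC CH] ch by (simp add: of_nat_diff)
  define h where "h = real (card H)"
  define c where "c = real (card C)"
  define k where "k = real (card K)"
  have hp: "h > 0" "c > 0" "k > 0" "c \<le> h" using cpos kpos ch unfolding h_def c_def k_def by auto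
  have tot: "real (card {(a, b). a \<in> H \<and> b \<in> K \<and> a \<otimes>\<^bsub>G\<^esub> b = b \<otimes>\<^bsub>G\<^esub> a}) \<le> c * k + (h - c) * k / m"
    using S split s1 s2 s2' unfolding h_def c_def k_def by linarith
  have cp: "comm_prob G H K = real (card {(a, b). a \<in> H \<and> b \<in> K \<and> a \<otimes>\<^bsub>G\<^esub> b = b \<otimes>\<^bsub>G\<^esub> a}) / (h * k)"
    unfolding comm_prob_def h_def k_def by simp
  have "comm_prob G H K \<le> (c * k + (h - c) * k / m) / (h * k)"
    unfolding cp using tot hp by (simp add: divide_right_mono)
  also have "\<dots> = (n + m - 1) / (n * m)"
    unfolding n_def C_def[symmetric] h_def[symmetric] c_def[symmetric]
    using hp mpos by (simp add: field_simps)
  finally show ?thesis .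
qed

end
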